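(* For every $n > 3$, the set $\{d_n\}$ is not equidistributed.
   Context: A linear arrangement of $\{1,\ldots,n\}$ is a sequence $a_1\cdots a_n$ in which each of $1,\ldots,n$ appears exactly once. It contains the pattern $ij$ if $a_t=i$ and $a_{t+1}=j$ for some $t$; otherwise it avoids it. $\{d_n\}$ is the set of linear arrangements of $\{1,\ldots,n\}$ avoiding all of the patterns $12, 23, \ldots, (n-1)n$. For a set $X$ of linear arrangements of $\{1,\ldots,n\}$ and $i\in\{1,\ldots,n\}$, the class $X^{(i)}$ is the set of arrangements in $X$ whose first entry is $i$. $X$ is called equidistributed if it is partitioned into its nonempty classes and all nonempty classes $X^{(i)}$ have the same cardinality. *)

theory Defs
  imports Main
begin

definition linear_arrangement :: "nat \<Rightarrow> nat list \<Rightarrow> bool" where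
  "linear_arrangement n a \<longleftrightarrow> distinct a \<and> set a = {1..n}"

definition contains_pattern :: "nat list \<Rightarrow> nat \<Rightarrow> nat \<Rightarrow> bool" where
  "contains_pattern a i j \<longleftrightarrow> (\<exists>t. Suc t < length a \<and> a ! t = i \<and> a ! Suc t = j)"

definition d_set :: "nat \<Rightarrow> nat list set" where
  "d_set n = {a. linear_arrangement n a \<and>
                 (\<forall>i\<in>{1..<n}. \<not> contains_pattern a i (Suc i))}"

definition arr_class :: "nat list set \<Rightarrow> nat \<Rightarrow> nat list set" where
  "arr_class X i = {a \<in> X. a \<noteq> [] \<and> hd a = i}"

definition equidistributed :: "nat \<Rightarrow> nat list set \<Rightarrow> bool" where
  "equidistributed n X \<longleftrightarrow>
     X = (\<Union>i\<in>{1..n}. arr_class X i) \<and>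
     (\<forall>i\<in>{1..n}. \<forall>j\<in>{1..n}. arr_class X i \<noteq> {} \<longrightarrow> arr_class X j \<noteq> {} \<longrightarrow>
        card (arr_class X i) = card (arr_class X j))"

end

theory Submission
  imports Defs
begin

lemma fin_d: "finite (d_set n)"
proof -
  have "d_set n \<subseteq> {xs. set xs \<subseteq> {1..n} \<and> length xs = n}"
    by (auto simp: d_set_def linear_arrangement_def distinct_card[symmetric])
  moreover have "finite {xs. set xs \<subseteq> {1..n} \<and> length xs = n}"
    by (rule finite_lists_length_eq) simp
  ultimately show ?thesis by (rule finite_subset)
qed

lemma mem_d_set_map:
  assumes "inj_on f {0..<n}" "f ` {0..<n} = {1..n}"
    "\<forall>t. Suc t < n \<longrightarrow> f (Suc t) \<noteq> Suc (f t)"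
  shows "map f [0..<n] \<in> d_set n"
  using assms
  by (auto simp: d_set_def linear_arrangement_def contains_pattern_def distinct_map)

definition gmap :: "nat \<Rightarrow> nat list \<Rightarrow> nat list" where
  "gmap n a = n # map (\<lambda>v. v - 1) (tl a)"

lemma gmap_in:
  assumes a: "a \<in> arr_class (d_set n) 1" and n: "n > 3"
  shows "gmap n a \<in> arr_class (d_set n) n"
proof -
  obtain w where aw: "a = 1 # w"
    using a by (cases a) (auto simp: arr_class_def)
  have la: "distinct (1 # w)" "set (1 # w) = {1..n}"
    and av: "\<forall>i\<in>{1..<n}. \<not> contains_pattern (1 # w) i (Suc i)"
    using a aw by (auto simp: arr_class_def d_set_def linear_arrangement_def)
  have "set w = set (1 # w) - {1}" using la by auto
  also have "\<dots> = {2..n}" using la by auto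
  finally have sw: "set w = {2..n}" .
  have ga: "gmap n a = n # map (\<lambda>v. v - 1) w" by (simp add: gmap_def aw)
  have inj: "inj_on (\<lambda>v. v - 1) (set w)" using sw by (auto simp: inj_on_def)
  have img: "(\<lambda>v. v - 1) ` {2..n} = {1..n-1}"
  proof
    show "(\<lambda>v. v - 1) ` {2..n} \<subseteq> {1..n - 1}" by auto
    show "{1..n - 1} \<subseteq> (\<lambda>v. v - 1) ` {2..n}"
    proof
      fix x assume "x \<in> {1..n-1}"
      then have "Suc x \<in> {2..n}" "x = Suc x - 1" by auto
      then show "x \<in> (\<lambda>v. v - 1) ` {2..n}" by blast
    qed
  qed
  have lin: "linear_arrangement n (gmap n a)"
    unfolding linear_arrangement_def ga using la inj sw img n
    by (auto simp: distinct_map)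
  have nopat: "\<not> contains_pattern (gmap n a) i (Suc i)" if i: "i \<in> {1..<n}" for i
  proof
    assume "contains_pattern (gmap n a) i (Suc i)"
    then obtain t where t: "Suc t < length (gmap n a)" "gmap n a ! t = i" "gmap n a ! Suc t = Suc i"
      unfolding contains_pattern_def by blast
    show False
    proof (cases t)
      case 0 then show ?thesis using t i ga by simp
    next
      case (Suc s)
      have s1: "Suc s < length w" using t Suc ga by simp
      have e1: "w ! s - 1 = i" "w ! Suc s - 1 = Suc i" using t Suc ga s1 by auto
      have m1: "w ! s \<in> {2..n}" "w ! Suc s \<in> {2..n}" using s1 sw nth_mem
        by (metis Suc_lessD, metis)
      have "w ! s = Suc i" "w ! Suc s = Suc (Suc i)" using e1 m1 by auto
      then have "contains_pattern (1 # w) (Suc i) (Suc (Suc i))"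
        unfolding contains_pattern_def using s1
        by (intro exI[of _ "Suc s"]) simp
      moreover have "Suc i \<in> {1..<n}" using m1 \<open>w ! Suc s = Suc (Suc i)\<close> by auto
      ultimately show False using av by blast
    qed
  qed
  show ?thesis using lin nopat by (simp add: arr_class_def d_set_def gmap_def)
qed

lemma gmap_inj: "inj_on (gmap n) (arr_class (d_set n) 1)"
proof (rule inj_onI)
  fix a b assume a: "a \<in> arr_class (d_set n) 1" and b: "b \<in> arr_class (d_set n) 1"
    and e: "gmap n a = gmap n b"
  obtain w where aw: "a = 1 # w" using a by (cases a) (auto simp: arr_class_def)
  obtain u where bu: "b = 1 # u" using b by (cases b) (auto simp: arr_class_def)
  have w0: "\<forall>x\<in>set w. x \<noteq> 0" using a aw
    by (auto simp: arr_class_def d_set_def linear_arrangement_def)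
  have u0: "\<forall>x\<in>set u. x \<noteq> 0" using b bu
    by (auto simp: arr_class_def d_set_def linear_arrangement_def)
  have "map (\<lambda>v. v - 1) w = map (\<lambda>v. v - 1) u" using e aw bu by (simp add: gmap_def)
  then have "map Suc (map (\<lambda>v. v - 1) w) = map Suc (map (\<lambda>v. v - 1) u)" by simp
  moreover have "map Suc (map (\<lambda>v. v - 1) w) = w" using w0 by (induct w) auto
  moreover have "map Suc (map (\<lambda>v. v - 1) u) = u" using u0 by (induct u) auto
  ultimately show "a = b" using aw bu by simp
qed

theorem proposition4p11:
  fixes n :: nat
  assumes "n > 3"
  shows "\<not> equidistributed n (d_set n)"
proof
  assume eq: "equidistributed n (d_set n)"
  define h where "h t = (if t = 0 then 1 else n + 1 - t)" for t :: nat
  define f where "f t = (if t = 0 then n else if t = 1 then 1 else n + 1 - t)" for t :: nat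
  have hin: "map h [0..<n] \<in> d_set n"
  proof (rule mem_d_set_map)
    show "inj_on h {0..<n}" by (auto simp: inj_on_def h_def split: if_splits)
    show "h ` {0..<n} = {1..n}"
    proof
      show "h ` {0..<n} \<subseteq> {1..n}" using assms by (auto simp: h_def)
      show "{1..n} \<subseteq> h ` {0..<n}"
      proof
        fix v assume v: "v \<in> {1..n}"
        show "v \<in> h ` {0..<n}"
        proof (cases "v = 1")
          case True then show ?thesis using assms by (auto simp: h_def intro!: image_eqI[of _ _ 0])
        next
          case False then show ?thesis using v
            by (auto simp: h_def intro!: image_eqI[of _ _ "n + 1 - v"])
        qed
      qed
    qed
    show "\<forall>t. Suc t < n \<longrightarrow> h (Suc t) \<noteq> Suc (h t)" using assms by (auto simp: h_def)
  qed
  have fin: "map f [0..<n] \<in> d_set n"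
  proof (rule mem_d_set_map)
    show "inj_on f {0..<n}" by (auto simp: inj_on_def f_def split: if_splits)
    show "f ` {0..<n} = {1..n}"
    proof
      show "f ` {0..<n} \<subseteq> {1..n}" using assms by (auto simp: f_def)
      show "{1..n} \<subseteq> f ` {0..<n}"
      proof
        fix v assume v: "v \<in> {1..n}"
        show "v \<in> f ` {0..<n}"
        proof (cases "v = 1")
          case True then show ?thesis using assms by (auto simp: f_def intro!: image_eqI[of _ _ 1])
        next
          case False
          show ?thesis
          proof (cases "v = n")
            case True then show ?thesis using assms by (auto simp: f_def intro!: image_eqI[of _ _ 0])
          next
            case False then show ?thesis using v \<open>v \<noteq> 1\<close>
              by (auto simp: f_def intro!: image_eqI[of _ _ "n + 1 - v"])
          qed
        qed
      qed
    qed
    show "\<forall>t. Suc t < n \<longrightarrow> f (Suc t) \<noteq> Suc (f t)" using assms by (auto simp: f_def)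
  qed
  let ?C1 = "arr_class (d_set n) 1" and ?Cn = "arr_class (d_set n) n"
  have hC: "map h [0..<n] \<in> ?C1" using hin assms by (simp add: arr_class_def hd_map h_def)
  have fC: "map f [0..<n] \<in> ?Cn" using fin assms by (simp add: arr_class_def hd_map f_def)
  have fnot: "map f [0..<n] \<notin> gmap n ` ?C1"
  proof
    assume "map f [0..<n] \<in> gmap n ` ?C1"
    then obtain a where a: "a \<in> ?C1" "gmap n a = map f [0..<n]"
      by (metis (no_types, lifting) imageE)
    obtain w where aw: "a = 1 # w" using a by (cases a) (auto simp: arr_class_def)
    have la: "length a = n" using a
      by (auto simp: arr_class_def d_set_def linear_arrangement_def distinct_card[symmetric])
    have "gmap n a ! 1 = map f [0..<n] ! 1" using a by simp
    moreover have "0 < length w" using la aw assms by auto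
    ultimately have "w ! 0 - 1 = 1" using la aw assms by (simp add: gmap_def f_def)
    then have "w ! 0 = 2" by simp
    then have "contains_pattern a 1 2" unfolding contains_pattern_def
      using la aw assms by (intro exI[of _ 0]) simp
    then show False using a assms by (auto simp: arr_class_def d_set_def numeral_2_eq_2)
  qed
  have sub: "gmap n ` ?C1 \<subset> ?Cn" using gmap_in assms fC fnot by blast
  have finCn: "finite ?Cn" using fin_d[of n] by (simp add: arr_class_def)
  have "card ?C1 = card (gmap n ` ?C1)" using gmap_inj by (simp add: card_image)
  also have "\<dots> < card ?Cn" using sub finCn by (rule psubset_card_mono[rotated])
  finally have lt: "card ?C1 < card ?Cn" .
  have eq2: "\<forall>i\<in>{1..n}. \<forall>j\<in>{1..n}. arr_class (d_set n) i \<noteq> {} \<longrightarrow>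
      arr_class (d_set n) j \<noteq> {} \<longrightarrow> card (arr_class (d_set n) i) = card (arr_class (d_set n) j)"
    using eq unfolding equidistributed_def by blast
  have i1: "1 \<in> {1..n}" and i2: "n \<in> {1..n}" using assms by auto
  have ne1: "?C1 \<noteq> {}" using hC by blast
  have ne2: "?Cn \<noteq> {}" using fC by blast
  have "card ?C1 = card ?Cn" using eq2 i1 i2 ne1 ne2 by blast
  then show False using lt by simp
qed

end
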